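(* Let $z\in(-1,1)$ be real and suppose that $f^{(1)}(L_z)$ and $g^{(1)}(L_z)$ are disjoint. Then there is an open neighbourhood $U$ of $z$ in $\mathbb{C}$ such that $\mathcal{M}\cap U\subseteq\mathbb{R}$.
   Context: For real $z\in(-1,1)$ define affine maps of $\mathbb{R}^2$ by $f^{(1)}(x,y)=(zx,\,x+zy)$ and $g^{(1)}(x,y)=(z(x-1)+1,\,x-1+zy)$, and let $L_z\subseteq\mathbb{R}^2$ be the limit set of the iterated function system $\{f^{(1)},g^{(1)}\}$ (the unique nonempty compact set with $L_z=f^{(1)}(L_z)\cup g^{(1)}(L_z)$). For $w\in\mathbb{D}^*=\{0<|w|<1\}$, let $\Lambda_w$ be the unique nonempty compact subset of $\mathbb{C}$ with $\Lambda_w=\{wx:x\in\Lambda_w\}\cup\{w(x-1)+1:x\in\Lambda_w\}$, and $\mathcal{M}=\{w\in\mathbb{D}^*:\Lambda_w\text{ connected}\}$. *)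

theory Defs
  imports "HOL-Analysis.Analysis"
begin

definition f1 :: "real \<Rightarrow> real \<times> real \<Rightarrow> real \<times> real" where
  "f1 z p = (z * fst p, fst p + z * snd p)"

definition g1 :: "real \<Rightarrow> real \<times> real \<Rightarrow> real \<times> real" where
  "g1 z p = (z * (fst p - 1) + 1, fst p - 1 + z * snd p)"

definition L :: "real \<Rightarrow> (real \<times> real) set" where
  "L z = (THE K. K \<noteq> {} \<and> compact K \<and> K = f1 z ` K \<union> g1 z ` K)"

definition Lambda :: "complex \<Rightarrow> complex set" where
  "Lambda w = (THE K. K \<noteq> {} \<and> compact K \<and>
      K = (\<lambda>x. w * x) ` K \<union> (\<lambda>x. w * (x - 1) + 1) ` K)"

definition Mset :: "complex set" where
  "Mset = {w. 0 < cmod w \<and> cmod w < 1 \<and> connected (Lambda w)}"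

end

theory Submission
  imports Defs
begin


lemma sum1: fixes x :: real assumes "\<bar>x\<bar> < 1"
  shows "summable (\<lambda>n. real (Suc n) * x ^ n)"
proof -
  have "summable (\<lambda>n. diffs (\<lambda>n. 1::real) n * x ^ n)"
    by (rule termdiff_converges[where K=1]) (use assms in \<open>auto intro: summable_geometric\<close>)
  then show ?thesis by (simp add: diffs_def)
qed

lemma sum2: fixes x :: real assumes "\<bar>x\<bar> < 1"
  shows "summable (\<lambda>n. real (Suc n) * real (Suc (Suc n)) * x ^ n)"
proof -
  have "summable (\<lambda>n. diffs (\<lambda>n. real (Suc n)) n * x ^ n)"
    by (rule termdiff_converges[where K=1]) (use assms sum1 in auto)
  then show ?thesis by (simp add: diffs_def mult_ac)
qed

lemma sum1': fixes x :: real assumes "\<bar>x\<bar> < 1"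
  shows "summable (\<lambda>n. real n * x ^ (n - 1))"
  using sum1[OF assms] summable_Suc_iff[of "\<lambda>n. real n * x ^ (n - 1)"] by simp

lemma sum2': fixes x :: real assumes "\<bar>x\<bar> < 1"
  shows "summable (\<lambda>n. real n * real (n - 1) * x ^ (n - 2))"
proof -
  define g where "g = (\<lambda>n. real n * real (n - 1) * x ^ (n - 2))"
  have "summable (\<lambda>n. g (Suc (Suc n)))"
    using sum2[OF assms] by (simp add: g_def mult_ac)
  then have "summable g" using summable_Suc_iff[of g] summable_Suc_iff[of "\<lambda>n. g (Suc n)"] by simp
  then show ?thesis by (simp add: g_def)
qed



locale affine_ifs =
  fixes F :: "bool \<Rightarrow> 'a::euclidean_space \<Rightarrow> 'a" and A :: "'a \<Rightarrow> 'a"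
    and \<beta> :: "bool \<Rightarrow> 'a" and c :: "nat \<Rightarrow> real" and \<pi> :: "(nat \<Rightarrow> bool) \<Rightarrow> 'a" and M :: real
  assumes F_def: "F b x = A x + \<beta> b"
    and linA: "linear A"
    and Abound: "norm ((A ^^ n) v) \<le> c n * norm v"
    and c0: "c \<longlonglongrightarrow> 0"
    and \<pi>bound: "norm (\<pi> a) \<le> M"
    and \<pi>eq: "\<pi> a = F (a 0) (\<pi> (\<lambda>n. a (Suc n)))"
begin

primrec W :: "nat \<Rightarrow> (nat \<Rightarrow> bool) \<Rightarrow> 'a \<Rightarrow> 'a" where
  "W 0 a x = x"
| "W (Suc n) a x = F (a 0) (W n (\<lambda>k. a (Suc k)) x)"

lemma W_diff: "W n a x - W n a y = (A ^^ n) (x - y)"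
proof (induction n arbitrary: a)
  case 0 then show ?case by simp
next
  case (Suc n)
  have "W (Suc n) a x - W (Suc n) a y = A (W n (\<lambda>k. a (Suc k)) x) - A (W n (\<lambda>k. a (Suc k)) y)"
    by (simp add: F_def)
  also have "\<dots> = A (W n (\<lambda>k. a (Suc k)) x - W n (\<lambda>k. a (Suc k)) y)"
    by (simp add: linear_diff[OF linA])
  also have "\<dots> = (A ^^ Suc n) (x - y)" using Suc.IH by simp
  finally show ?case .
qed

lemma W_dist: "norm (W n a x - W n a y) \<le> c n * norm (x - y)"
  using W_diff Abound by simp

lemma c_nonneg: "c n \<ge> 0"
proof -
  obtain v :: 'a where "norm v = 1" using vector_choose_size[of 1] by auto
  have "norm ((A ^^ n) v) \<le> c n * norm v" by (rule Abound)
  have "0 \<le> c n * norm v" by (rule order_trans[OF norm_ge_zero Abound])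
  then show ?thesis using \<open>norm v = 1\<close> by simp
qed

lemma \<pi>_W: "\<pi> a = W n a (\<pi> (\<lambda>k. a (k + n)))"
proof (induction n arbitrary: a)
  case 0 then show ?case by simp
next
  case (Suc n)
  have "W (Suc n) a (\<pi> (\<lambda>k. a (k + Suc n))) = F (a 0) (W n (\<lambda>k. a (Suc k)) (\<pi> (\<lambda>k. a (Suc (k + n)))))"
    by simp
  also have "\<dots> = F (a 0) (\<pi> (\<lambda>k. a (Suc k)))"
    using Suc.IH[of "\<lambda>k. a (Suc k)"] by simp
  also have "\<dots> = \<pi> a" using \<pi>eq[of a] by simp
  finally show ?case by simp
qed

lemma F_cont: "continuous_on S (F b)"
  unfolding F_def[abs_def]
  by (intro continuous_intros linear_continuous_on linA[unfolded linear_conv_bounded_linear])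

definition cons :: "bool \<Rightarrow> (nat \<Rightarrow> bool) \<Rightarrow> nat \<Rightarrow> bool" where
  "cons b a = (\<lambda>n. case n of 0 \<Rightarrow> b | Suc m \<Rightarrow> a m)"

lemma F_\<pi>: "F b (\<pi> a) = \<pi> (cons b a)"
  using \<pi>eq[of "cons b a"] by (simp add: cons_def)

lemma range_inv: "range \<pi> = F False ` range \<pi> \<union> F True ` range \<pi>"
proof
  show "range \<pi> \<subseteq> F False ` range \<pi> \<union> F True ` range \<pi>"
  proof
    fix x assume "x \<in> range \<pi>"
    then obtain a where "x = \<pi> a" by auto
    then have "x = F (a 0) (\<pi> (\<lambda>n. a (Suc n)))" using \<pi>eq[of a] by simp
    then show "x \<in> F False ` range \<pi> \<union> F True ` range \<pi>" by (cases "a 0") auto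
  qed
  show "F False ` range \<pi> \<union> F True ` range \<pi> \<subseteq> range \<pi>"
    using F_\<pi> by auto
qed

lemma subset_K:
  assumes "K \<noteq> {}" "closed K" "F False ` K \<subseteq> K" "F True ` K \<subseteq> K"
  shows "range \<pi> \<subseteq> K"
proof
  fix x assume "x \<in> range \<pi>"
  then obtain a where xa: "x = \<pi> a" by auto
  obtain x0 where x0: "x0 \<in> K" using assms by auto
  have inK: "W n a' y \<in> K" if "y \<in> K" for n a' y
    using that
  proof (induction n arbitrary: a')
    case 0 then show ?case by simp
  next
    case (Suc n)
    then have "W n (\<lambda>k. a' (Suc k)) y \<in> K" by blast
    then show ?case using assms(3,4) by (cases "a' 0") auto
  qed
  have "(\<lambda>n. W n a x0 - \<pi> a) \<longlonglongrightarrow> 0"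
  proof (rule Lim_null_comparison)
    show "\<forall>\<^sub>F n in sequentially. norm (W n a x0 - \<pi> a) \<le> c n * (norm x0 + M)"
    proof (intro always_eventually allI)
      fix n
      have "norm (W n a x0 - \<pi> a) = norm (W n a x0 - W n a (\<pi> (\<lambda>k. a (k + n))))"
        using \<pi>_W[of a n] by simp
      also have "\<dots> \<le> c n * norm (x0 - \<pi> (\<lambda>k. a (k + n)))" by (rule W_dist)
      also have "\<dots> \<le> c n * (norm x0 + M)"
        using c_nonneg[of n] \<pi>bound[of "\<lambda>k. a (k + n)"]
        by (intro mult_left_mono) (auto intro: order_trans[OF norm_triangle_ineq4])
      finally show "norm (W n a x0 - \<pi> a) \<le> c n * (norm x0 + M)" .
    qed
    show "(\<lambda>n. c n * (norm x0 + M)) \<longlonglongrightarrow> 0"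
      using tendsto_mult_left_zero[OF c0] by simp
  qed
  then have "(\<lambda>n. (W n a x0 - \<pi> a) + \<pi> a) \<longlonglongrightarrow> 0 + \<pi> a"
    by (intro tendsto_add tendsto_const)
  then have "(\<lambda>n. W n a x0) \<longlonglongrightarrow> \<pi> a" by simp
  then show "x \<in> K" unfolding xa by (rule closed_sequentially[OF assms(2) inK[OF x0]])
qed

lemma K_subset:
  assumes "compact K" "K \<subseteq> F False ` K \<union> F True ` K"
  shows "K \<subseteq> range \<pi>"
proof
  fix x assume xK: "x \<in> K"
  obtain B where B: "\<And>y. y \<in> K \<Longrightarrow> norm y \<le> B"
    using compact_imp_bounded[OF assms(1)] unfolding bounded_iff by blast
  have ex: "\<exists>p. snd p \<in> K \<and> y = F (fst p) (snd p)" if "y \<in> K" for y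
  proof -
    from that assms(2) have "y \<in> F False ` K \<or> y \<in> F True ` K" by blast
    then obtain b y' where "y' \<in> K" "y = F b y'" by blast
    then show ?thesis by (intro exI[of _ "(b,y')"]) simp
  qed
  define st where "st y = (SOME p. snd p \<in> K \<and> y = F (fst p) (snd p))" for y
  have st: "snd (st y) \<in> K \<and> y = F (fst (st y)) (snd (st y))" if "y \<in> K" for y
    unfolding st_def by (rule someI_ex[OF ex[OF that]])
  define ys where "ys n = ((snd \<circ> st) ^^ n) x" for n
  define a where "a n = fst (st (ys n))" for n
  have ysK: "ys n \<in> K" for n
  proof (induction n)
    case 0 then show ?case by (simp add: ys_def xK)
  next
    case (Suc n) then show ?case using st[OF Suc.IH] by (simp add: ys_def)
  qed
  have ysS: "ys (Suc n) = snd (st (ys n))" for n by (simp add: ys_def)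
  have ysF: "ys n = F (a n) (ys (Suc n))" for n
    using st[OF ysK[of n]] by (simp add: ysS a_def)
  have ysW: "ys m = W n (\<lambda>k. a (k + m)) (ys (m + n))" for n m
  proof (induction n arbitrary: m)
    case 0 then show ?case by simp
  next
    case (Suc n)
    have "W (Suc n) (\<lambda>k. a (k + m)) (ys (m + Suc n)) = F (a m) (W n (\<lambda>k. a (k + Suc m)) (ys (Suc m + n)))"
      by simp
    also have "\<dots> = F (a m) (ys (Suc m))" using Suc.IH[of "Suc m"] by simp
    finally show ?case using ysF[of m] by simp
  qed
  have le: "norm (x - \<pi> a) \<le> c n * (B + M)" for n
  proof -
    have "norm (x - \<pi> a) = norm (W n a (ys n) - W n a (\<pi> (\<lambda>k. a (k + n))))"
      using ysW[of 0 n] \<pi>_W[of a n] by (simp add: ys_def)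
    also have "\<dots> \<le> c n * norm (ys n - \<pi> (\<lambda>k. a (k + n)))" by (rule W_dist)
    also have "\<dots> \<le> c n * (B + M)"
      using c_nonneg[of n] \<pi>bound[of "\<lambda>k. a (k + n)"] B[OF ysK[of n]]
      by (intro mult_left_mono) (auto intro: order_trans[OF norm_triangle_ineq4])
    finally show ?thesis .
  qed
  have "(\<lambda>n. c n * (B + M)) \<longlonglongrightarrow> 0"
    using tendsto_mult_left_zero[OF c0] by simp
  then have "norm (x - \<pi> a) \<le> 0"
    by (rule LIMSEQ_le[OF tendsto_const]) (use le in auto)
  then have "x = \<pi> a" by simp
  then show "x \<in> range \<pi>" by simp
qed

lemma unique:
  assumes "K \<noteq> {}" "compact K" "K = F False ` K \<union> F True ` K"
  shows "K = range \<pi>"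
proof
  show "K \<subseteq> range \<pi>" using K_subset[of K] assms(2,3) by blast
  have "F False ` K \<subseteq> K" "F True ` K \<subseteq> K" using assms(3) by blast+
  then show "range \<pi> \<subseteq> K" using subset_K[of K] assms(1,2) compact_imp_closed by blast
qed

lemma closure_img: "closure (F b ` S) = F b ` closure S" if "bounded S" for b S
proof
  have cpt: "compact (F b ` closure S)"
    using that by (intro compact_continuous_image F_cont) (simp add: compact_closure)
  show "closure (F b ` S) \<subseteq> F b ` closure S"
    using cpt by (intro closure_minimal closure_subset[THEN image_mono] compact_imp_closed)
  show "F b ` closure S \<subseteq> closure (F b ` S)"
    by (rule image_closure_subset[OF F_cont closed_closure closure_subset])
qed

lemma P_range: "range \<pi> \<noteq> {} \<and> compact (range \<pi>) \<and> range \<pi> = F False ` range \<pi> \<union> F True ` range \<pi>"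
proof -
  have bd: "bounded (range \<pi>)" unfolding bounded_iff using \<pi>bound by blast
  have P: "closure (range \<pi>) \<noteq> {} \<and> compact (closure (range \<pi>)) \<and>
     closure (range \<pi>) = F False ` closure (range \<pi>) \<union> F True ` closure (range \<pi>)"
  proof (intro conjI)
    show "closure (range \<pi>) \<noteq> {}" by simp
    show "compact (closure (range \<pi>))" using bd compact_closure by blast
    have "closure (range \<pi>) = closure (F False ` range \<pi>) \<union> closure (F True ` range \<pi>)"
      by (subst range_inv) (rule closure_Un)
    then show "closure (range \<pi>) = F False ` closure (range \<pi>) \<union> F True ` closure (range \<pi>)"
      using closure_img[OF bd] by simp
  qed
  then have "closure (range \<pi>) = range \<pi>" by (elim conjE) (rule unique)
  then show ?thesis using P by simp
qed

lemma THE_eq: "(THE K. K \<noteq> {} \<and> compact K \<and> K = F False ` K \<union> F True ` K) = range \<pi>"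
proof (rule the_equality)
  show "range \<pi> \<noteq> {} \<and> compact (range \<pi>) \<and> range \<pi> = F False ` range \<pi> \<union> F True ` range \<pi>"
    by (rule P_range)
  fix K assume "K \<noteq> {} \<and> compact K \<and> K = F False ` K \<union> F True ` K"
  then show "K = range \<pi>" by (elim conjE) (rule unique)
qed

end


lemma sum_bound:
  fixes f :: "nat \<Rightarrow> 'a::banach"
  assumes "\<And>n. norm (f n) \<le> g n" "summable g"
  shows "summable f" "norm (suminf f) \<le> suminf g"
proof -
  show sf: "summable f" by (rule summable_comparison_test[of f g]) (use assms in auto)
  have "summable (\<lambda>n. norm (f n))" by (rule summable_comparison_test[of _ g]) (use assms in auto)
  then have "norm (suminf f) \<le> (\<Sum>n. norm (f n))" by (rule summable_norm)
  also have "\<dots> \<le> suminf g" by (rule suminf_le) (use assms \<open>summable (\<lambda>n. norm (f n))\<close> in auto)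
  finally show "norm (suminf f) \<le> suminf g" .
qed

definition dd :: "bool \<Rightarrow> real" where "dd b = (if b then 1 else 0)"

lemma dd_le: "\<bar>dd b\<bar> \<le> 1" "0 \<le> dd b" by (auto simp: dd_def)

definition piC :: "complex \<Rightarrow> (nat \<Rightarrow> bool) \<Rightarrow> complex" where
  "piC w a = (\<Sum>n. (1 - w) * w ^ n * of_real (dd (a n)))"

lemma piC_summable:
  assumes "cmod w < 1"
  shows "summable (\<lambda>n. (1 - w) * w ^ n * of_real (dd (a n)))"
    "cmod (piC w a) \<le> cmod (1 - w) / (1 - cmod w)"
proof -
  have b: "norm ((1 - w) * w ^ n * of_real (dd (a n))) \<le> cmod (1 - w) * cmod w ^ n" for n
    by (auto simp: norm_mult norm_power dd_def)
  have s: "summable (\<lambda>n. cmod (1 - w) * cmod w ^ n)"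
    using assms by (intro summable_mult summable_geometric) auto
  show "summable (\<lambda>n. (1 - w) * w ^ n * of_real (dd (a n)))" by (rule sum_bound(1)[OF b s])
  have "cmod (piC w a) \<le> (\<Sum>n. cmod (1 - w) * cmod w ^ n)"
    unfolding piC_def by (rule sum_bound(2)[OF b s])
  also have "\<dots> = cmod (1 - w) / (1 - cmod w)"
    using assms by (simp add: suminf_mult suminf_geometric divide_simps)
  finally show "cmod (piC w a) \<le> cmod (1 - w) / (1 - cmod w)" .
qed

lemma piC_eq:
  assumes "cmod w < 1"
  shows "piC w a = w * piC w (\<lambda>n. a (Suc n)) + (if a 0 then 1 - w else 0)"
proof -
  define t where "t n = (1 - w) * w ^ n * of_real (dd (a n))" for n
  have s: "summable t" unfolding t_def by (rule piC_summable(1)[OF assms])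
  have s2: "summable (\<lambda>n. (1 - w) * w ^ n * of_real (dd (a (Suc n))))"
    by (rule piC_summable(1)[OF assms])
  have "(\<Sum>n. t (Suc n)) = suminf t - t 0" by (rule suminf_split_head[OF s])
  moreover have "(\<Sum>n. t (Suc n)) = w * piC w (\<lambda>n. a (Suc n))"
    unfolding piC_def t_def using suminf_mult[OF s2, of w]
    by (simp add: mult_ac)
  moreover have "t 0 = (if a 0 then 1 - w else 0)" by (simp add: t_def dd_def)
  ultimately show ?thesis unfolding piC_def t_def[symmetric] by simp
qed

lemma Lambda_eq:
  assumes "0 < cmod w" "cmod w < 1"
  shows "Lambda w = range (piC w)" "compact (range (piC w))"
    "Lambda w = (\<lambda>x. w * x) ` Lambda w \<union> (\<lambda>x. w * (x - 1) + 1) ` Lambda w"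
    "w * piC w a = piC w (case_nat False a)" "w * (piC w a - 1) + 1 = piC w (case_nat True a)"
proof -
  define F where "F b x = w * x + (if b then 1 - w else 0)" for b x
  interpret I: affine_ifs F "\<lambda>x. w * x" "\<lambda>b. if b then 1 - w else 0" "\<lambda>n. cmod w ^ n" "piC w"
    "cmod (1 - w) / (1 - cmod w)"
  proof unfold_locales
    show "F b x = w * x + (if b then 1 - w else 0)" for b x by (simp add: F_def)
    show "w * (x + y) = w * x + w * y" for x y by (simp add: algebra_simps)
    show "w * (r *\<^sub>R x) = r *\<^sub>R (w * x)" for r x by (simp add: scaleR_conv_of_real)
    show "norm ((((*) w) ^^ n) v) \<le> cmod w ^ n * norm v" for n v
    proof -
      have "(((*) w) ^^ n) v = w ^ n * v" by (induction n) auto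
      then show ?thesis by (simp add: norm_mult norm_power)
    qed
    show "(\<lambda>n. cmod w ^ n) \<longlonglongrightarrow> 0" using assms by (intro LIMSEQ_power_zero) auto
    show "cmod (piC w a) \<le> cmod (1 - w) / (1 - cmod w)" for a by (rule piC_summable(2)[OF assms(2)])
    show "piC w a = F (a 0) (piC w (\<lambda>n. a (Suc n)))" for a
      using piC_eq[OF assms(2), of a] by (simp add: F_def)
  qed
  have f: "(\<lambda>x. w * x) = F False" and g: "(\<lambda>x. w * (x - 1) + 1) = F True"
    by (auto simp: F_def algebra_simps)
  show L: "Lambda w = range (piC w)" unfolding Lambda_def g unfolding f by (rule I.THE_eq)
  show "compact (range (piC w))" using I.P_range by blast
  show "Lambda w = (\<lambda>x. w * x) ` Lambda w \<union> (\<lambda>x. w * (x - 1) + 1) ` Lambda w"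
    unfolding L g unfolding f using I.P_range by blast
  show "w * piC w a = piC w (case_nat False a)"
    using I.F_\<pi>[of False a] by (simp add: F_def I.cons_def)
  show "w * (piC w a - 1) + 1 = piC w (case_nat True a)"
    using I.F_\<pi>[of True a] by (simp add: F_def I.cons_def algebra_simps)
qed



definition gR :: "real \<Rightarrow> nat \<Rightarrow> real" where
  "gR z n = real n * z ^ (n - 1) - real (Suc n) * z ^ n"

definition piR :: "real \<Rightarrow> (nat \<Rightarrow> bool) \<Rightarrow> real \<times> real" where
  "piR z a = ((\<Sum>n. (1 - z) * z ^ n * dd (a n)), (\<Sum>n. gR z n * dd (a n)))"

lemma gR_Suc: "gR z (Suc m) = z * gR z m + (1 - z) * z ^ m"
  by (cases m) (auto simp: gR_def algebra_simps)

definition MR :: "real \<Rightarrow> real" where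
  "MR z = \<bar>1 - z\<bar> / (1 - \<bar>z\<bar>) + (\<Sum>n. real n * \<bar>z\<bar> ^ (n - 1)) + (\<Sum>n. real (Suc n) * \<bar>z\<bar> ^ n)"

lemma piR_summable:
  assumes "\<bar>z\<bar> < 1"
  shows "summable (\<lambda>n. (1 - z) * z ^ n * dd (a n))" "summable (\<lambda>n. gR z n * dd (a n))"
    "norm (piR z a) \<le> MR z"
proof -
  have za: "\<bar>\<bar>z\<bar>\<bar> < 1" using assms by simp
  have b1: "norm ((1 - z) * z ^ n * dd (a n)) \<le> \<bar>1 - z\<bar> * \<bar>z\<bar> ^ n" for n
    by (auto simp: abs_mult power_abs dd_def)
  have s1: "summable (\<lambda>n. \<bar>1 - z\<bar> * \<bar>z\<bar> ^ n)"
    using assms by (intro summable_mult summable_geometric) auto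
  have b2: "norm (gR z n * dd (a n)) \<le> real n * \<bar>z\<bar> ^ (n - 1) + real (Suc n) * \<bar>z\<bar> ^ n" for n
  proof -
    have "\<bar>gR z n\<bar> \<le> real n * \<bar>z\<bar> ^ (n - 1) + real (Suc n) * \<bar>z\<bar> ^ n"
      unfolding gR_def
      by (rule order_trans[OF abs_triangle_ineq4]) (simp add: abs_mult power_abs)
    then show ?thesis by (auto simp: dd_def)
  qed
  have s2: "summable (\<lambda>n. real n * \<bar>z\<bar> ^ (n - 1) + real (Suc n) * \<bar>z\<bar> ^ n)"
    by (intro summable_add sum1' sum1 za)
  show "summable (\<lambda>n. (1 - z) * z ^ n * dd (a n))" by (rule sum_bound(1)[OF b1 s1])
  show "summable (\<lambda>n. gR z n * dd (a n))" by (rule sum_bound(1)[OF b2 s2])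
  have n1: "norm (\<Sum>n. (1 - z) * z ^ n * dd (a n)) \<le> \<bar>1 - z\<bar> / (1 - \<bar>z\<bar>)"
  proof -
    have "norm (\<Sum>n. (1 - z) * z ^ n * dd (a n)) \<le> (\<Sum>n. \<bar>1 - z\<bar> * \<bar>z\<bar> ^ n)"
      by (rule sum_bound(2)[OF b1 s1])
    also have "\<dots> = \<bar>1 - z\<bar> * (1 / (1 - \<bar>z\<bar>))"
      using suminf_mult[OF summable_geometric[of "\<bar>z\<bar>"], of "\<bar>1 - z\<bar>"] suminf_geometric[of "\<bar>z\<bar>"] za
      by simp
    also have "\<dots> = \<bar>1 - z\<bar> / (1 - \<bar>z\<bar>)" by simp
    finally show ?thesis .
  qed
  have n2: "norm (\<Sum>n. gR z n * dd (a n)) \<le> (\<Sum>n. real n * \<bar>z\<bar> ^ (n - 1)) + (\<Sum>n. real (Suc n) * \<bar>z\<bar> ^ n)"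
    using sum_bound(2)[OF b2 s2] suminf_add[OF sum1'[OF za] sum1[OF za]] by simp
  show "norm (piR z a) \<le> MR z"
    unfolding piR_def MR_def
    using norm_Pair_le[of "\<Sum>n. (1 - z) * z ^ n * dd (a n)" "\<Sum>n. gR z n * dd (a n)"] n1 n2 by linarith
qed

lemma piR_eq:
  assumes "\<bar>z\<bar> < 1"
  shows "piR z a = (z * fst (piR z (\<lambda>n. a (Suc n))) + (if a 0 then 1 - z else 0),
     fst (piR z (\<lambda>n. a (Suc n))) + z * snd (piR z (\<lambda>n. a (Suc n))) + (if a 0 then -1 else 0))"
proof -
  define t where "t n = (1 - z) * z ^ n * dd (a n)" for n
  define u where "u n = gR z n * dd (a n)" for n
  have st: "summable t" unfolding t_def by (rule piR_summable(1)[OF assms])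
  have su: "summable u" unfolding u_def by (rule piR_summable(2)[OF assms])
  have st2: "summable (\<lambda>n. (1 - z) * z ^ n * dd (a (Suc n)))" by (rule piR_summable(1)[OF assms])
  have su2: "summable (\<lambda>n. gR z n * dd (a (Suc n)))" by (rule piR_summable(2)[OF assms])
  have "(\<Sum>n. t (Suc n)) = suminf t - t 0" by (rule suminf_split_head[OF st])
  moreover have "(\<Sum>n. t (Suc n)) = z * fst (piR z (\<lambda>n. a (Suc n)))"
    unfolding piR_def t_def using suminf_mult[OF st2, of z] by (simp add: mult_ac)
  moreover have "t 0 = (if a 0 then 1 - z else 0)" by (simp add: t_def dd_def)
  moreover have "(\<Sum>n. u (Suc n)) = suminf u - u 0" by (rule suminf_split_head[OF su])
  moreover have "(\<Sum>n. u (Suc n)) = fst (piR z (\<lambda>n. a (Suc n))) + z * snd (piR z (\<lambda>n. a (Suc n)))"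
  proof -
    have "(\<lambda>n. u (Suc n)) = (\<lambda>n. z * (gR z n * dd (a (Suc n))) + (1 - z) * z ^ n * dd (a (Suc n)))"
      by (auto simp: u_def gR_Suc algebra_simps)
    then have "(\<Sum>n. u (Suc n)) = (\<Sum>n. z * (gR z n * dd (a (Suc n)))) + (\<Sum>n. (1 - z) * z ^ n * dd (a (Suc n)))"
      using suminf_add[OF summable_mult[OF su2, of z] st2] by simp
    then show ?thesis unfolding piR_def using suminf_mult[OF su2, of z] by simp
  qed
  moreover have "u 0 = (if a 0 then -1 else 0)" by (simp add: u_def dd_def gR_def)
  ultimately show ?thesis unfolding piR_def t_def[symmetric] u_def[symmetric] by simp
qed



lemma L_eq:
  assumes "\<bar>z\<bar> < 1"
  shows "L z = range (piR z)" "compact (range (piR z))"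
    "f1 z (piR z a) = piR z (case_nat False a)" "g1 z (piR z a) = piR z (case_nat True a)"
proof -
  define A where "A p = (z * fst p, fst p + z * snd p)" for p :: "real \<times> real"
  define F where "F b p = A p + (if b then (1 - z, -1) else (0, 0))" for b p
  have An: "(A ^^ n) p = (z ^ n * fst p, real n * z ^ (n - 1) * fst p + z ^ n * snd p)" for n p
  proof (induction n)
    case 0 then show ?case by simp
  next
    case (Suc n)
    have e: "z * (real n * z ^ (n - 1)) = real n * z ^ n" by (cases n) auto
    show ?case using Suc e by (simp add: A_def algebra_simps) blast
  qed
  have za: "\<bar>\<bar>z\<bar>\<bar> < 1" using assms by simp
  interpret I: affine_ifs F A "\<lambda>b. if b then (1 - z, -1) else (0, 0)"
    "\<lambda>n. 2 * \<bar>z\<bar> ^ n + real n * \<bar>z\<bar> ^ (n - 1)" "piR z" "MR z"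
  proof unfold_locales
    show "F b x = A x + (if b then (1 - z, -1) else (0, 0))" for b x by (simp add: F_def)
    show "A (x + y) = A x + A y" for x y by (simp add: A_def algebra_simps)
    show "A (r *\<^sub>R x) = r *\<^sub>R A x" for r x by (simp add: A_def algebra_simps)
    show "norm ((A ^^ n) v) \<le> (2 * \<bar>z\<bar> ^ n + real n * \<bar>z\<bar> ^ (n - 1)) * norm v" for n v
    proof -
      have h1: "\<bar>fst v\<bar> \<le> norm v" "\<bar>snd v\<bar> \<le> norm v"
        using norm_fst_le[of "fst v" "snd v"] norm_snd_le[of "snd v" "fst v"] by auto
      have "norm ((A ^^ n) v) \<le> \<bar>z ^ n * fst v\<bar> + \<bar>real n * z ^ (n - 1) * fst v + z ^ n * snd v\<bar>"
        unfolding An using norm_Pair_le by (metis real_norm_def)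
      also have "\<dots> \<le> \<bar>z\<bar> ^ n * \<bar>fst v\<bar> + (real n * \<bar>z\<bar> ^ (n - 1) * \<bar>fst v\<bar> + \<bar>z\<bar> ^ n * \<bar>snd v\<bar>)"
        by (intro add_mono order_refl order_trans[OF abs_triangle_ineq]) (auto simp: abs_mult power_abs)
      also have "\<dots> \<le> \<bar>z\<bar> ^ n * norm v + (real n * \<bar>z\<bar> ^ (n - 1) * norm v + \<bar>z\<bar> ^ n * norm v)"
        using h1 by (intro add_mono mult_left_mono) auto
      finally show ?thesis by (simp add: algebra_simps)
    qed
    show "(\<lambda>n. 2 * \<bar>z\<bar> ^ n + real n * \<bar>z\<bar> ^ (n - 1)) \<longlonglongrightarrow> 0"
    proof -
      have p0: "(\<lambda>n. \<bar>z\<bar> ^ n) \<longlonglongrightarrow> 0" by (rule LIMSEQ_power_zero) (use assms in simp)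
      show ?thesis
      using tendsto_add[OF tendsto_mult_right_zero[OF p0] summable_LIMSEQ_zero[OF sum1'[OF za]], of 2]
      by simp
    qed
    show "norm (piR z a) \<le> MR z" for a by (rule piR_summable(3)[OF assms])
    show "piR z a = F (a 0) (piR z (\<lambda>n. a (Suc n)))" for a
      using piR_eq[OF assms, of a] by (simp add: F_def A_def)
  qed
  have f: "f1 z = F False" and g: "g1 z = F True"
    by (auto simp: F_def A_def f1_def g1_def algebra_simps)
  show "L z = range (piR z)" unfolding L_def f g by (rule I.THE_eq)
  show "compact (range (piR z))" using I.P_range by blast
  show "f1 z (piR z a) = piR z (case_nat False a)"
    using I.F_\<pi>[of False a] by (simp add: f I.cons_def)
  show "g1 z (piR z a) = piR z (case_nat True a)"
    using I.F_\<pi>[of True a] by (simp add: g I.cons_def)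
qed



definition hh :: "nat \<Rightarrow> complex \<Rightarrow> complex \<Rightarrow> complex" where
  "hh n x y = (\<Sum>i<n. y ^ (n - Suc i) * x ^ i)"

lemma hh_diff: "x ^ n - y ^ n = (x - y) * hh n x y"
  unfolding hh_def by (rule power_diff_sumr2)

lemma hh_same: "hh n z z = of_nat n * z ^ (n - 1)"
proof -
  have "hh n z z = (\<Sum>i<n. z ^ (n - 1))"
    unfolding hh_def by (intro sum.cong refl) (simp add: power_add[symmetric])
  then show ?thesis by simp
qed

lemma hh_bound:
  assumes "norm x \<le> R" "norm y \<le> R"
  shows "norm (hh n x y) \<le> real n * R ^ (n - 1)"
proof -
  have R0: "0 \<le> R" using assms(1) norm_ge_zero order_trans by blast
  have "norm (hh n x y) \<le> (\<Sum>i<n. norm (y ^ (n - Suc i) * x ^ i))"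
    unfolding hh_def by (rule norm_sum)
  also have "\<dots> \<le> (\<Sum>i<n. R ^ (n - 1))"
  proof (rule sum_mono)
    fix i assume "i \<in> {..<n}"
    then have e: "n - Suc i + i = n - 1" by auto
    have "norm (y ^ (n - Suc i) * x ^ i) \<le> R ^ (n - Suc i) * R ^ i"
      unfolding norm_mult norm_power
      using assms R0 by (intro mult_mono power_mono) auto
    also have "\<dots> = R ^ (n - 1)" by (simp add: power_add[symmetric] e)
    finally show "norm (y ^ (n - Suc i) * x ^ i) \<le> R ^ (n - 1)" .
  qed
  finally show ?thesis by simp
qed

lemma pow_diff_bound:
  fixes x y :: complex
  assumes "norm x \<le> R" "norm y \<le> R"
  shows "norm (x ^ k - y ^ k) \<le> real k * R ^ (k - 1) * norm (x - y)"
  unfolding hh_diff norm_mult using hh_bound[OF assms, of k]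
  by (simp add: mult_left_mono mult.commute)

lemma hh_lip:
  assumes "norm x \<le> R" "norm y \<le> R" "norm z \<le> R"
  shows "norm (hh n x y - hh n z z) \<le> real n * real (n - 1) * R ^ (n - 2) * (norm (x - z) + norm (y - z))"
proof -
  have R0: "0 \<le> R" using assms(1) norm_ge_zero order_trans by blast
  let ?e = "norm (x - z) + norm (y - z)"
  have key: "real j * R ^ (j - 1) * R ^ i \<le> real (n - 1) * R ^ (n - 2)" if "i + j = n - 1" for i j
  proof (cases j)
    case 0 then show ?thesis using R0 by simp
  next
    case (Suc j')
    then have e: "j - 1 + i = n - 2" "j \<le> n - 1" using that by auto
    have p: "R ^ (j - 1) * R ^ i = R ^ (n - 2)" using e(1) by (metis power_add)
    have "real j * R ^ (j - 1) * R ^ i = real j * R ^ (n - 2)"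
      using p by (simp add: mult.assoc)
    also have "\<dots> \<le> real (n - 1) * R ^ (n - 2)"
      using e(2) R0 by (intro mult_right_mono) auto
    finally show ?thesis .
  qed
  have "hh n x y - hh n z z = (\<Sum>i<n. y ^ (n - Suc i) * x ^ i - z ^ (n - Suc i) * z ^ i)"
    unfolding hh_def by (simp add: sum_subtractf)
  then have "norm (hh n x y - hh n z z) \<le> (\<Sum>i<n. norm (y ^ (n - Suc i) * x ^ i - z ^ (n - Suc i) * z ^ i))"
    by (simp add: norm_sum)
  also have "\<dots> \<le> (\<Sum>i<n. real (n - 1) * R ^ (n - 2) * ?e)"
  proof (rule sum_mono)
    fix i assume i: "i \<in> {..<n}"
    define j where "j = n - Suc i"
    have ij: "i + j = n - 1" using i by (auto simp: j_def)
    have "y ^ j * x ^ i - z ^ j * z ^ i = (y ^ j - z ^ j) * x ^ i + z ^ j * (x ^ i - z ^ i)"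
      by (simp add: algebra_simps)
    then have "norm (y ^ j * x ^ i - z ^ j * z ^ i) \<le> norm (y ^ j - z ^ j) * norm (x ^ i) + norm (z ^ j) * norm (x ^ i - z ^ i)"
      by (metis norm_mult norm_triangle_ineq)
    also have "\<dots> \<le> (real j * R ^ (j - 1) * norm (y - z)) * R ^ i + R ^ j * (real i * R ^ (i - 1) * norm (x - z))"
      using assms R0
      by (intro add_mono mult_mono pow_diff_bound) (auto simp: norm_power intro: power_mono)
    also have "\<dots> = (real j * R ^ (j - 1) * R ^ i) * norm (y - z) + (real i * R ^ (i - 1) * R ^ j) * norm (x - z)"
      by (simp add: algebra_simps)
    also have "\<dots> \<le> (real (n - 1) * R ^ (n - 2)) * norm (y - z) + (real (n - 1) * R ^ (n - 2)) * norm (x - z)"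
      using key[of i j] key[of j i] ij by (intro add_mono mult_right_mono) (auto simp: add.commute)
    also have "\<dots> = real (n - 1) * R ^ (n - 2) * ?e" by (simp add: algebra_simps)
    finally show "norm (y ^ (n - Suc i) * x ^ i - z ^ (n - Suc i) * z ^ i) \<le> real (n - 1) * R ^ (n - 2) * ?e"
      by (simp add: j_def)
  qed
  also have "\<dots> = real n * real (n - 1) * R ^ (n - 2) * ?e" by (simp only: sum_constant card_lessThan mult.assoc)
  finally show ?thesis .
qed



definition SS :: "(nat \<Rightarrow> real) \<Rightarrow> complex \<Rightarrow> complex" where
  "SS d x = (\<Sum>n. of_real (d n) * x ^ n)"

definition QQ :: "(nat \<Rightarrow> real) \<Rightarrow> complex \<Rightarrow> complex \<Rightarrow> complex" where
  "QQ d x y = (\<Sum>n. of_real (d n) * hh n x y)"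

definition K1 :: "real \<Rightarrow> real" where "K1 R = (\<Sum>n. real n * R ^ (n - 1))"
definition K2 :: "real \<Rightarrow> real" where "K2 R = (\<Sum>n. real n * real (n - 1) * R ^ (n - 2))"

context
  fixes d :: "nat \<Rightarrow> real" and R :: real
  assumes d1: "\<And>n. \<bar>d n\<bar> \<le> 1" and R0: "0 \<le> R" and R1: "R < 1"
begin

lemma Ra: "\<bar>R\<bar> < 1" using R0 R1 by simp

lemma SS_summable: fixes x :: complex shows "norm x \<le> R \<Longrightarrow> summable (\<lambda>n. of_real (d n) * x ^ n)"
proof -
  assume x: "norm x \<le> R"
  have b: "norm (of_real (d n) * x ^ n) \<le> R ^ n" for n
  proof -
    have "\<bar>d n\<bar> * norm x ^ n \<le> 1 * R ^ n"
      using d1[of n] x by (intro mult_mono power_mono) auto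
    then show ?thesis by (simp add: norm_mult norm_power)
  qed
  have "summable (\<lambda>n. R ^ n)" using R0 R1 by (intro summable_geometric) auto
  then show ?thesis by (rule sum_bound(1)[OF b])
qed

lemma QQ_term: "norm x \<le> R \<Longrightarrow> norm y \<le> R \<Longrightarrow> norm (of_real (d n) * hh n x y) \<le> real n * R ^ (n - 1)"
  unfolding norm_mult using hh_bound[of x R y n] d1[of n]
  by (simp add: mult_le_one mult_left_le_one_le order_trans[OF mult_right_mono[of _ 1]])

lemma QQ_summable: "norm x \<le> R \<Longrightarrow> norm y \<le> R \<Longrightarrow> summable (\<lambda>n. of_real (d n) * hh n x y)"
  by (rule sum_bound(1)[OF QQ_term sum1'[OF Ra]])

lemma QQ_bound: "norm x \<le> R \<Longrightarrow> norm y \<le> R \<Longrightarrow> norm (QQ d x y) \<le> K1 R"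
  unfolding QQ_def K1_def by (rule sum_bound(2)[OF QQ_term sum1'[OF Ra]])

lemma SS_diff: "norm x \<le> R \<Longrightarrow> norm y \<le> R \<Longrightarrow> SS d x - SS d y = (x - y) * QQ d x y"
proof -
  assume x: "norm x \<le> R" and y: "norm y \<le> R"
  have "SS d x - SS d y = (\<Sum>n. of_real (d n) * x ^ n - of_real (d n) * y ^ n)"
    unfolding SS_def by (rule suminf_diff) (use SS_summable x y in auto)
  also have "\<dots> = (\<Sum>n. (x - y) * (of_real (d n) * hh n x y))"
  proof (rule suminf_cong)
    fix n
    have "of_real (d n) * x ^ n - of_real (d n) * y ^ n = of_real (d n) * (x ^ n - y ^ n)"
      by (rule right_diff_distrib[symmetric])
    also have "\<dots> = (x - y) * (of_real (d n) * hh n x y)" unfolding hh_diff by (simp only: mult_ac)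
    finally show "of_real (d n) * x ^ n - of_real (d n) * y ^ n = (x - y) * (of_real (d n) * hh n x y)" .
  qed
  also have "\<dots> = (x - y) * QQ d x y"
    unfolding QQ_def by (rule suminf_mult[OF QQ_summable[OF x y]])
  finally show ?thesis .
qed

lemma QQ_lip:
  assumes x: "norm x \<le> R" and y: "norm y \<le> R" and z: "norm z \<le> R"
  shows "norm (QQ d x y - QQ d z z) \<le> K2 R * (norm (x - z) + norm (y - z))"
proof -
  let ?e = "norm (x - z) + norm (y - z)"
  have "QQ d x y - QQ d z z = (\<Sum>n. of_real (d n) * (hh n x y - hh n z z))"
  proof -
    have "QQ d x y - QQ d z z = (\<Sum>n. of_real (d n) * hh n x y - of_real (d n) * hh n z z)"
      unfolding QQ_def by (rule suminf_diff) (use QQ_summable x y z in auto)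
    then show ?thesis by (simp add: algebra_simps)
  qed
  also have "norm \<dots> \<le> (\<Sum>n. real n * real (n - 1) * R ^ (n - 2) * ?e)"
  proof (rule sum_bound(2))
    show "summable (\<lambda>n. real n * real (n - 1) * R ^ (n - 2) * ?e)"
      by (intro summable_mult2 sum2'[OF Ra])
    fix n
    have "norm (of_real (d n) * (hh n x y - hh n z z)) \<le> 1 * norm (hh n x y - hh n z z)"
      unfolding norm_mult using d1[of n] by (intro mult_right_mono) auto
    also have "\<dots> \<le> real n * real (n - 1) * R ^ (n - 2) * ?e" using hh_lip[OF x y z, of n] by simp
    finally show "norm (of_real (d n) * (hh n x y - hh n z z)) \<le> real n * real (n - 1) * R ^ (n - 2) * ?e" .
  qed
  also have "\<dots> = K2 R * ?e" unfolding K2_def by (rule suminf_mult2[symmetric, OF sum2'[OF Ra]])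
  finally show ?thesis .
qed

lemma SS_cnj: "norm x \<le> R \<Longrightarrow> SS d (cnj x) = cnj (SS d x)"
proof -
  assume x: "norm x \<le> R"
  have "(\<lambda>n. of_real (d n) * x ^ n) sums SS d x" unfolding SS_def by (rule summable_sums[OF SS_summable[OF x]])
  then have "(\<lambda>n. cnj (of_real (d n) * x ^ n)) sums cnj (SS d x)" by (simp only: sums_cnj)
  then have "(\<lambda>n. of_real (d n) * cnj x ^ n) sums cnj (SS d x)" by simp
  then show ?thesis unfolding SS_def by (rule sums_unique[symmetric])
qed

end


lemma K_nonneg: "0 \<le> R \<Longrightarrow> R < 1 \<Longrightarrow> 0 \<le> K1 R \<and> 0 \<le> K2 R"
  unfolding K1_def K2_def
  by (intro conjI suminf_nonneg sum1' sum2') auto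

lemma Lambda_pair:
  assumes "w \<in> Mset"
  shows "\<exists>a b. piC w (case_nat False a) = piC w (case_nat True b)"
proof -
  have w: "0 < cmod w" "cmod w < 1" "connected (Lambda w)" using assms by (auto simp: Mset_def)
  let ?f = "\<lambda>x. w * x" and ?g = "\<lambda>x. w * (x - 1) + 1"
  let ?S = "Lambda w"
  have cS: "compact ?S" using Lambda_eq(1,2)[OF w(1,2)] by simp
  have eq: "?S = ?f ` ?S \<union> ?g ` ?S" by (rule Lambda_eq(3)[OF w(1,2)])
  have ne: "?S \<noteq> {}" using Lambda_eq(1)[OF w(1,2)] by simp
  have cf: "closed (?f ` ?S)" by (intro compact_imp_closed compact_continuous_image cS continuous_intros)
  have cg: "closed (?g ` ?S)" by (intro compact_imp_closed compact_continuous_image cS continuous_intros)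
  have sf: "?f ` ?S \<subseteq> ?S" by (subst (2) eq) (rule Un_upper1)
  have sg: "?g ` ?S \<subseteq> ?S" by (subst (2) eq) (rule Un_upper2)
  have sfg: "?S \<subseteq> ?f ` ?S \<union> ?g ` ?S" by (subst (1) eq) (rule order_refl)
  obtain x0 where x0: "x0 \<in> ?S" using ne by blast
  have nf: "?f ` ?S \<inter> ?S \<noteq> {}" using x0 sf by blast
  have ng: "?g ` ?S \<inter> ?S \<noteq> {}" using x0 sg by blast
  have "\<not> (closed (?f ` ?S) \<and> closed (?g ` ?S) \<and> ?S \<subseteq> ?f ` ?S \<union> ?g ` ?S \<and>
      ?f ` ?S \<inter> ?g ` ?S \<inter> ?S = {} \<and> ?f ` ?S \<inter> ?S \<noteq> {} \<and> ?g ` ?S \<inter> ?S \<noteq> {})"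
    using w(3)[unfolded connected_closed] by blast
  then have "?f ` ?S \<inter> ?g ` ?S \<inter> ?S \<noteq> {}"
    using cf cg sfg nf ng by blast
  then obtain p q where p: "p \<in> ?S" and q: "q \<in> ?S" and pq: "w * p = w * (q - 1) + 1" by blast
  obtain a where a: "p = piC w a" using p Lambda_eq(1)[OF w(1,2)] by auto
  obtain b where b: "q = piC w b" using q Lambda_eq(1)[OF w(1,2)] by auto
  show ?thesis
    using pq Lambda_eq(4,5)[OF w(1,2)] unfolding a b by metis
qed



lemma gR_alt: "gR z n = (1 - z) * (real n * z ^ (n - 1)) - z ^ n"
  by (cases n) (auto simp: gR_def algebra_simps)

lemma piC_diff:
  assumes "cmod w < 1"
  shows "piC w A - piC w B = (1 - w) * SS (\<lambda>n. dd (A n) - dd (B n)) w"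
proof -
  define d where "d n = dd (A n) - dd (B n)" for n
  have d1: "\<bar>d n\<bar> \<le> 1" for n by (auto simp: d_def dd_def)
  have sS: "summable (\<lambda>n. of_real (d n) * w ^ n)"
    by (rule SS_summable[OF d1 norm_ge_zero assms order_refl])
  have "piC w A - piC w B = (\<Sum>n. (1 - w) * w ^ n * of_real (dd (A n)) - (1 - w) * w ^ n * of_real (dd (B n)))"
    unfolding piC_def by (rule suminf_diff) (use piC_summable(1)[OF assms] in auto)
  also have "\<dots> = (\<Sum>n. (1 - w) * (of_real (d n) * w ^ n))"
    by (intro suminf_cong) (simp add: d_def algebra_simps)
  also have "\<dots> = (1 - w) * SS d w" unfolding SS_def by (rule suminf_mult[OF sS])
  moreover have dd': "d = (\<lambda>n. dd (A n) - dd (B n))" by (rule ext) (simp add: d_def)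
  ultimately show ?thesis by simp
qed

lemma piR_diff:
  assumes "\<bar>z\<bar> < 1" and d_def: "\<And>n. d n = dd (A n) - dd (B n)"
  shows "piR z A - piR z B = ((1 - z) * (\<Sum>n. d n * z ^ n),
     (1 - z) * (\<Sum>n. d n * (real n * z ^ (n - 1))) - (\<Sum>n. d n * z ^ n))"
    "summable (\<lambda>n. d n * z ^ n)" "summable (\<lambda>n. d n * (real n * z ^ (n - 1)))"
proof -
  have za: "\<bar>\<bar>z\<bar>\<bar> < 1" using assms by simp
  have d1: "\<bar>d n\<bar> \<le> 1" for n by (auto simp: d_def dd_def)
  have b1: "norm (d n * z ^ n) \<le> \<bar>z\<bar> ^ n" for n
    using d1[of n] by (simp add: abs_mult power_abs mult_left_le_one_le)
  show sR: "summable (\<lambda>n. d n * z ^ n)"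
    by (rule sum_bound(1)[OF b1]) (use za in \<open>auto intro: summable_geometric\<close>)
  have b2: "norm (d n * (real n * z ^ (n - 1))) \<le> real n * \<bar>z\<bar> ^ (n - 1)" for n
    using d1[of n] by (simp add: abs_mult power_abs mult_left_le_one_le)
  show sT: "summable (\<lambda>n. d n * (real n * z ^ (n - 1)))"
    by (rule sum_bound(1)[OF b2 sum1'[OF za]])
  have e1: "fst (piR z A) - fst (piR z B) = (1 - z) * (\<Sum>n. d n * z ^ n)"
  proof -
    have "fst (piR z A) - fst (piR z B) = (\<Sum>n. (1 - z) * z ^ n * dd (A n) - (1 - z) * z ^ n * dd (B n))"
      unfolding piR_def fst_conv by (rule suminf_diff) (use piR_summable(1)[OF assms(1)] in auto)
    also have "\<dots> = (\<Sum>n. (1 - z) * (d n * z ^ n))"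
      by (intro suminf_cong) (simp add: d_def algebra_simps)
    also have "\<dots> = (1 - z) * (\<Sum>n. d n * z ^ n)" by (rule suminf_mult[OF sR])
    finally show ?thesis .
  qed
  have e2: "snd (piR z A) - snd (piR z B) = (1 - z) * (\<Sum>n. d n * (real n * z ^ (n - 1))) - (\<Sum>n. d n * z ^ n)"
  proof -
    have "snd (piR z A) - snd (piR z B) = (\<Sum>n. gR z n * dd (A n) - gR z n * dd (B n))"
      unfolding piR_def snd_conv by (rule suminf_diff) (use piR_summable(2)[OF assms(1)] in auto)
    also have "\<dots> = (\<Sum>n. (1 - z) * (d n * (real n * z ^ (n - 1))) - d n * z ^ n)"
      by (intro suminf_cong) (simp add: d_def gR_alt algebra_simps)
    also have "\<dots> = (\<Sum>n. (1 - z) * (d n * (real n * z ^ (n - 1)))) - (\<Sum>n. d n * z ^ n)"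
      by (rule suminf_diff[symmetric]) (use sR summable_mult[OF sT] in auto)
    also have "\<dots> = (1 - z) * (\<Sum>n. d n * (real n * z ^ (n - 1))) - (\<Sum>n. d n * z ^ n)"
      using suminf_mult[OF sT, of "1 - z"] by simp
    finally show ?thesis .
  qed
  show "piR z A - piR z B = ((1 - z) * (\<Sum>n. d n * z ^ n),
     (1 - z) * (\<Sum>n. d n * (real n * z ^ (n - 1))) - (\<Sum>n. d n * z ^ n))"
    using e1 e2 by (simp add: prod_eq_iff)
qed



theorem lemma10p2p1:
  fixes z :: real
  assumes "-1 < z" and "z < 1"
    and "f1 z ` L z \<inter> g1 z ` L z = {}"
  shows "\<exists>U. open U \<and> complex_of_real z \<in> U \<and> Mset \<inter> U \<subseteq> \<real>"
proof -
  have za: "\<bar>z\<bar> < 1" using assms(1,2) by auto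
  note Leq = L_eq[OF za]
  have cf: "continuous_on UNIV (f1 z)" unfolding f1_def[abs_def] by (intro continuous_intros)
  have cg: "continuous_on UNIV (g1 z)" unfolding g1_def[abs_def] by (intro continuous_intros)
  have c1: "compact (f1 z ` L z)" unfolding Leq(1)
    by (rule compact_continuous_image[OF continuous_on_subset[OF cf] Leq(2)]) simp
  have c2: "closed (g1 z ` L z)" unfolding Leq(1)
    by (rule compact_imp_closed[OF compact_continuous_image[OF continuous_on_subset[OF cg] Leq(2)]]) simp
  obtain \<delta> where \<delta>0: "\<delta> > 0" and \<delta>: "\<And>x y. x \<in> f1 z ` L z \<Longrightarrow> y \<in> g1 z ` L z \<Longrightarrow> \<delta> \<le> dist x y"
    using separate_compact_closed[OF c1 c2 assms(3)] by blast
  have h\<delta>: "\<delta> \<le> dist (piR z (case_nat False a)) (piR z (case_nat True b))" for a b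
  proof -
    have "piR z (case_nat False a) \<in> f1 z ` L z" unfolding Leq(1) Leq(3)[symmetric] by blast
    moreover have "piR z (case_nat True b) \<in> g1 z ` L z" unfolding Leq(1) Leq(4)[symmetric] by blast
    ultimately show ?thesis by (rule \<delta>)
  qed
  define R where "R = (1 + \<bar>z\<bar>) / 2"
  have R0: "0 \<le> R" and R1: "R < 1" and zR: "\<bar>z\<bar> < R" using za by (auto simp: R_def)
  have Kn: "0 \<le> K1 R" "0 \<le> K2 R" using K_nonneg[OF R0 R1] by auto
  define K where "K = 3 * K1 R + 4 * K2 R + 1"
  have K0: "K > 0" using Kn by (simp add: K_def)
  define \<epsilon> where "\<epsilon> = min (R - \<bar>z\<bar>) (\<delta> / K)"
  have \<epsilon>0: "\<epsilon> > 0" using zR \<delta>0 K0 by (simp add: \<epsilon>_def)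
  define zc where "zc = complex_of_real z"
  have zcR: "norm zc \<le> R" using zR by (simp add: zc_def)
  have main: "w \<in> \<real>" if wM: "w \<in> Mset" and wd: "dist zc w < \<epsilon>" for w
  proof (rule ccontr)
    assume nr: "w \<notin> \<real>"
    obtain a b where ab: "piC w (case_nat False a) = piC w (case_nat True b)"
      using Lambda_pair[OF wM] by blast
    define A where "A = case_nat False a"
    define B where "B = case_nat True b"
    define d where "d n = dd (A n) - dd (B n)" for n
    have dfun: "(\<lambda>n. dd (A n) - dd (B n)) = d" by (rule ext) (simp add: d_def)
    have d1: "\<bar>d n\<bar> \<le> 1" for n by (auto simp: d_def dd_def)
    define e where "e = cmod (w - zc)"
    have ee: "e < \<epsilon>" using wd by (simp add: e_def dist_norm norm_minus_commute)
    have e0: "0 \<le> e" by (simp add: e_def)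
    have wR: "norm w \<le> R"
    proof -
      have "norm w \<le> norm zc + norm (w - zc)" by (rule norm_triangle_sub)
      also have "\<dots> < \<bar>z\<bar> + \<epsilon>" using ee by (simp add: zc_def e_def)
      also have "\<dots> \<le> R" by (simp add: \<epsilon>_def)
      finally show ?thesis by simp
    qed
    have w1: "cmod w < 1" using wR R1 by simp
    have cwR: "norm (cnj w) \<le> R" using wR by simp
    have "piC w A - piC w B = (1 - w) * SS d w" using piC_diff[OF w1, of A B] unfolding dfun .
    moreover have "piC w A = piC w B" using ab by (simp add: A_def B_def)
    ultimately have "(1 - w) * SS d w = 0" by simp
    moreover have "1 - w \<noteq> 0" using w1 by auto
    ultimately have S0: "SS d w = 0" by simp
    have S0': "SS d (cnj w) = 0" using SS_cnj[OF d1 R0 R1 wR] S0 by simp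
    have "w - cnj w \<noteq> 0" using nr by (simp add: complex_is_Real_iff complex_eq_iff)
    moreover have "SS d w - SS d (cnj w) = (w - cnj w) * QQ d w (cnj w)"
      by (rule SS_diff[OF d1 R0 R1 wR cwR])
    ultimately have Q0: "QQ d w (cnj w) = 0" using S0 S0' by simp
    have "SS d zc - SS d w = (zc - w) * QQ d zc w"
      by (rule SS_diff[OF d1 R0 R1 zcR wR])
    then have "cmod (SS d zc) = cmod (zc - w) * cmod (QQ d zc w)" using S0 by (simp add: norm_mult)
    also have "\<dots> \<le> e * K1 R"
      using QQ_bound[OF d1 R0 R1 zcR wR] by (intro mult_mono) (auto simp: e_def norm_minus_commute)
    finally have bS: "cmod (SS d zc) \<le> e * K1 R" .
    have "cnj w - zc = cnj (w - zc)" by (simp add: zc_def)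
    then have "cmod (cnj w - zc) = e" unfolding e_def by (metis complex_mod_cnj)
    then have "cmod (QQ d w (cnj w) - QQ d zc zc) \<le> K2 R * (e + e)"
      using QQ_lip[OF d1 R0 R1 wR cwR zcR] by (simp add: e_def)
    then have bQ: "cmod (QQ d zc zc) \<le> 2 * e * K2 R" using Q0 by (simp add: algebra_simps)
    note pd = piR_diff[OF za, of d A B, OF d_def]
    define SR where "SR = (\<Sum>n. d n * z ^ n)"
    define TR where "TR = (\<Sum>n. d n * (real n * z ^ (n - 1)))"
    have "complex_of_real SR = (\<Sum>n. complex_of_real (d n * z ^ n))"
      unfolding SR_def by (rule suminf_of_real[OF pd(2)])
    also have "\<dots> = SS d zc" unfolding SS_def zc_def by simp
    finally have SRe: "\<bar>SR\<bar> \<le> e * K1 R" using bS by (metis norm_of_real)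
    have "complex_of_real TR = (\<Sum>n. complex_of_real (d n * (real n * z ^ (n - 1))))"
      unfolding TR_def by (rule suminf_of_real[OF pd(3)])
    also have "\<dots> = QQ d zc zc" unfolding QQ_def zc_def hh_same by simp
    finally have TRe: "\<bar>TR\<bar> \<le> 2 * e * K2 R" using bQ by (metis norm_of_real)
    have "\<delta> \<le> dist (piR z A) (piR z B)" unfolding A_def B_def by (rule h\<delta>)
    also have "\<dots> = norm ((1 - z) * SR, (1 - z) * TR - SR)"
      unfolding dist_norm pd(1) SR_def TR_def ..
    also have "\<dots> \<le> \<bar>(1 - z) * SR\<bar> + \<bar>(1 - z) * TR - SR\<bar>"
      using norm_Pair_le[of "(1 - z) * SR" "(1 - z) * TR - SR"] by simp
    also have "\<dots> \<le> 2 * \<bar>SR\<bar> + (2 * \<bar>TR\<bar> + \<bar>SR\<bar>)"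
    proof -
      have z2: "\<bar>1 - z\<bar> \<le> 2" using za by auto
      have "\<bar>(1 - z) * SR\<bar> \<le> 2 * \<bar>SR\<bar>" unfolding abs_mult by (rule mult_right_mono[OF z2]) simp
      moreover have "\<bar>(1 - z) * TR\<bar> \<le> 2 * \<bar>TR\<bar>" unfolding abs_mult by (rule mult_right_mono[OF z2]) simp
      ultimately show ?thesis by linarith
    qed
    also have "\<dots> \<le> e * K" using SRe TRe e0 Kn by (simp add: K_def algebra_simps)
    also have "\<dots> < \<epsilon> * K" using ee K0 by simp
    also have "\<dots> \<le> \<delta>" using K0 by (simp add: \<epsilon>_def min_def field_simps split: if_splits)
    finally show False by simp
  qed
  show ?thesis
  proof (intro exI conjI)
    show "open (ball zc \<epsilon>)" by simp
    show "complex_of_real z \<in> ball zc \<epsilon>" using \<epsilon>0 by (simp add: zc_def)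
    show "Mset \<inter> ball zc \<epsilon> \<subseteq> \<real>" using main by auto
  qed
qed


end
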